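(* Let $R$ be a ring and let $A=\sigma(R)\langle x_1,\dots,x_n\rangle$ be a skew PBW extension of $R$ with associated families $\Sigma,\Delta$. Suppose $R$ is $(\Sigma,\Delta)$-compatible, Abelian, NI, and satisfies condition (SA1). If $R$ is a right (resp. left) p.p.-ring, then $A$ has Property $(a.c.)$ on the right (resp. left).
   Context: All rings are associative with identity. For $S\subseteq T$ (a ring $T$), $r_T(S)=\{a\in T: Sa=0\}$ and $\ell_T(S)=\{a\in T: aS=0\}$. A ring $A$ is a skew PBW extension of $R$, written $A=\sigma(R)\langle x_1,\dots,x_n\rangle$, if: (i) $R$ is a subring of $A$ with the same identity; (ii) there are elements $x_1,\dots,x_n\in A$ such that $A$ is a free left $R$-module with basis the standard monomials $x^\alpha=x_1^{\alpha_1}\cdots x_n^{\alpha_n}$, $\alpha\in\mathbb N^n$ (with $x^0=1$); (iii) for each $i$ and each nonzero $r\in R$ there is nonzero $c_{i,r}\in R$ with $x_ir-c_{i,r}x_i\in R$; (iv) for all $i,j$ there is nonzero $d_{i,j}\in R$ with $x_jx_i-d_{i,j}x_ix_j\in R+Rx_1+\cdots+Rx_n$. For such $A$ there are injective endomorphisms $\sigma_i$ of $R$ and $\sigma_i$-derivations $\delta_i$ of $R$ with $x_ir=\sigma_i(r)x_i+\delta_i(r)$ for all $r\in R$; $\Sigma=\{\sigma_1,\dots,\sigma_n\}$, $\Delta=\{\delta_1,\dots,\delta_n\}$. For $\alpha\in\mathbb N^n$, $\sigma^\alpha=\sigma_1^{\alpha_1}\circ\cdots\circ\sigma_n^{\alpha_n}$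 and $\delta^\alpha=\delta_1^{\alpha_1}\circ\cdots\circ\delta_n^{\alpha_n}$. $R$ is $\Sigma$-compatible if for all $a,b\in R$ and $\alpha\in\mathbb N^n$: $a\sigma^\alpha(b)=0$ iff $ab=0$; $R$ is $\Delta$-compatible if for all $a,b\in R$ and $\beta\in\mathbb N^n$: $ab=0$ implies $a\delta^\beta(b)=0$; $(\Sigma,\Delta)$-compatible means both. $R$ satisfies condition (SA1) if whenever $fg=0$ for $f=a_0+a_1X_1+\cdots+a_mX_m$ and $g=b_0+b_1Y_1+\cdots+b_tY_t$ in $A$ (with $a_i,b_j\in R$ and $X_i,Y_j$ standard monomials), then $a_ib_j=0$ for all $i,j$. $R$ is Abelian if every idempotent of $R$ is central. $R$ is NI if the upper nilradical $\mathrm{nil}^*(R)$ (sum of all nil ideals) equals the set $\mathrm{nil}(R)$ of nilpotent elements. $R$ is a right (resp. left) p.p.-ring if for each $a\in R$ there is an idempotent $e$ with $r_R(a)=eR$ (resp. $\ell_R(a)=Re$). A ring $T$ has Property $(a.c.)$ on the right if for every finitely generated right ideal $I$ of $T$ there is $c\in T$ with $r_T(I)=r_T(cT)$; on the left if for every finitely generated left ideal $I$ there is $c\in T$ with $\ell_T(I)=\ell_T(Tc)$. *)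

theory Defs
  imports Main
begin

text \<open>The ambient ring A is the whole type 'a (a ring with identity); R is a subset of it.
Indices of the variables are 0..n-1 (standing for x_1..x_n).\<close>

definition subring_of :: "'a::ring_1 set \<Rightarrow> bool" where
  "subring_of R \<longleftrightarrow> 1 \<in> R \<and> 0 \<in> R \<and> (\<forall>a\<in>R. \<forall>b\<in>R. a + b \<in> R \<and> a * b \<in> R \<and> - a \<in> R)"

definition exps :: "nat \<Rightarrow> (nat \<Rightarrow> nat) set" where
  "exps n = {\<alpha>. \<forall>i\<ge>n. \<alpha> i = 0}"

fun std_mono :: "(nat \<Rightarrow> 'a::ring_1) \<Rightarrow> nat \<Rightarrow> (nat \<Rightarrow> nat) \<Rightarrow> 'a" where
  "std_mono x 0 \<alpha> = 1"
| "std_mono x (Suc k) \<alpha> = std_mono x k \<alpha> * x k ^ \<alpha> k"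

fun comp_pow :: "(nat \<Rightarrow> 'b \<Rightarrow> 'b) \<Rightarrow> nat \<Rightarrow> (nat \<Rightarrow> nat) \<Rightarrow> 'b \<Rightarrow> 'b" where
  "comp_pow f 0 \<alpha> = id"
| "comp_pow f (Suc k) \<alpha> = comp_pow f k \<alpha> \<circ> (f k ^^ \<alpha> k)"

definition lin_comb :: "(nat \<Rightarrow> 'a::ring_1) \<Rightarrow> nat \<Rightarrow> (nat \<Rightarrow> nat) set \<Rightarrow> ((nat \<Rightarrow> nat) \<Rightarrow> 'a) \<Rightarrow> 'a" where
  "lin_comb x n S c = (\<Sum>\<alpha>\<in>S. c \<alpha> * std_mono x n \<alpha>)"

definition skew_PBW :: "'a::ring_1 set \<Rightarrow> nat \<Rightarrow> (nat \<Rightarrow> 'a) \<Rightarrow> bool" where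
  "skew_PBW R n x \<longleftrightarrow>
     subring_of R
   \<and> (\<forall>f::'a. \<exists>S c. finite S \<and> S \<subseteq> exps n \<and> (\<forall>\<alpha>\<in>S. c \<alpha> \<in> R) \<and> f = lin_comb x n S c)
   \<and> (\<forall>S c. finite S \<and> S \<subseteq> exps n \<and> (\<forall>\<alpha>\<in>S. c \<alpha> \<in> R) \<and> lin_comb x n S c = 0
            \<longrightarrow> (\<forall>\<alpha>\<in>S. c \<alpha> = 0))
   \<and> (\<forall>i<n. \<forall>r\<in>R. r \<noteq> 0 \<longrightarrow> (\<exists>c\<in>R. c \<noteq> 0 \<and> x i * r - c * x i \<in> R))
   \<and> (\<forall>i<n. \<forall>j<n. \<exists>d\<in>R. d \<noteq> 0 \<and>
        (\<exists>r0\<in>R. \<exists>r. (\<forall>k<n. r k \<in> R) \<and>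
            x j * x i - d * x i * x j = r0 + (\<Sum>k<n. r k * x k)))"

text \<open>sigma, delta are the (uniquely determined) maps with x_i r = sigma_i(r) x_i + delta_i(r).\<close>
definition PBW_maps :: "'a::ring_1 set \<Rightarrow> nat \<Rightarrow> (nat \<Rightarrow> 'a) \<Rightarrow> (nat \<Rightarrow> 'a \<Rightarrow> 'a) \<Rightarrow> (nat \<Rightarrow> 'a \<Rightarrow> 'a) \<Rightarrow> bool" where
  "PBW_maps R n x \<sigma> \<delta> \<longleftrightarrow>
     (\<forall>i<n. \<forall>r\<in>R. \<sigma> i r \<in> R \<and> \<delta> i r \<in> R \<and> x i * r = \<sigma> i r * x i + \<delta> i r)"

definition Sigma_compatible :: "'a::ring_1 set \<Rightarrow> nat \<Rightarrow> (nat \<Rightarrow> 'a \<Rightarrow> 'a) \<Rightarrow> bool" where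
  "Sigma_compatible R n \<sigma> \<longleftrightarrow>
     (\<forall>a\<in>R. \<forall>b\<in>R. \<forall>\<alpha>. a * comp_pow \<sigma> n \<alpha> b = 0 \<longleftrightarrow> a * b = 0)"

definition Delta_compatible :: "'a::ring_1 set \<Rightarrow> nat \<Rightarrow> (nat \<Rightarrow> 'a \<Rightarrow> 'a) \<Rightarrow> bool" where
  "Delta_compatible R n \<delta> \<longleftrightarrow>
     (\<forall>a\<in>R. \<forall>b\<in>R. \<forall>\<beta>. a * b = 0 \<longrightarrow> a * comp_pow \<delta> n \<beta> b = 0)"

definition SA1 :: "'a::ring_1 set \<Rightarrow> nat \<Rightarrow> (nat \<Rightarrow> 'a) \<Rightarrow> bool" where
  "SA1 R n x \<longleftrightarrow>
     (\<forall>S a T b. finite S \<and> S \<subseteq> exps n \<and> (\<forall>\<alpha>\<in>S. a \<alpha> \<in> R)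
       \<and> finite T \<and> T \<subseteq> exps n \<and> (\<forall>\<beta>\<in>T. b \<beta> \<in> R)
       \<and> lin_comb x n S a * lin_comb x n T b = 0
       \<longrightarrow> (\<forall>\<alpha>\<in>S. \<forall>\<beta>\<in>T. a \<alpha> * b \<beta> = 0))"

definition abelian_ring :: "'a::ring_1 set \<Rightarrow> bool" where
  "abelian_ring R \<longleftrightarrow> (\<forall>e\<in>R. e * e = e \<longrightarrow> (\<forall>r\<in>R. e * r = r * e))"

definition nil_set :: "'a::ring_1 set \<Rightarrow> 'a set" where
  "nil_set R = {a\<in>R. \<exists>k. a ^ k = 0}"

definition two_sided_ideal :: "'a::ring_1 set \<Rightarrow> 'a set \<Rightarrow> bool" where
  "two_sided_ideal R I \<longleftrightarrow> I \<subseteq> R \<and> 0 \<in> I \<and> (\<forall>a\<in>I. \<forall>b\<in>I. a + b \<in> I \<and> - a \<in> I)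
     \<and> (\<forall>a\<in>I. \<forall>r\<in>R. r * a \<in> I \<and> a * r \<in> I)"

definition nil_ideal :: "'a::ring_1 set \<Rightarrow> 'a set \<Rightarrow> bool" where
  "nil_ideal R I \<longleftrightarrow> two_sided_ideal R I \<and> I \<subseteq> nil_set R"

definition upper_nilradical :: "'a::ring_1 set \<Rightarrow> 'a set" where
  "upper_nilradical R = {a. \<exists>xs. (\<forall>y\<in>set xs. \<exists>I. nil_ideal R I \<and> y \<in> I) \<and> a = sum_list xs}"

definition NI_ring :: "'a::ring_1 set \<Rightarrow> bool" where
  "NI_ring R \<longleftrightarrow> upper_nilradical R = nil_set R"

definition rann :: "'a::ring_1 set \<Rightarrow> 'a set \<Rightarrow> 'a set" where
  "rann T S = {a\<in>T. \<forall>s\<in>S. s * a = 0}"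

definition lann :: "'a::ring_1 set \<Rightarrow> 'a set \<Rightarrow> 'a set" where
  "lann T S = {a\<in>T. \<forall>s\<in>S. a * s = 0}"

definition right_pp :: "'a::ring_1 set \<Rightarrow> bool" where
  "right_pp R \<longleftrightarrow> (\<forall>a\<in>R. \<exists>e\<in>R. e * e = e \<and> rann R {a} = {e * r | r. r \<in> R})"

definition left_pp :: "'a::ring_1 set \<Rightarrow> bool" where
  "left_pp R \<longleftrightarrow> (\<forall>a\<in>R. \<exists>e\<in>R. e * e = e \<and> lann R {a} = {r * e | r. r \<in> R})"

definition right_ideal_gen :: "'a::ring_1 set \<Rightarrow> 'a set" where
  "right_ideal_gen F = {\<Sum>f\<in>F. f * g f | g. True}"

definition left_ideal_gen :: "'a::ring_1 set \<Rightarrow> 'a set" where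
  "left_ideal_gen F = {\<Sum>f\<in>F. g f * f | g. True}"

definition ac_right :: "'a::ring_1 itself \<Rightarrow> bool" where
  "ac_right _ \<longleftrightarrow> (\<forall>F::'a set. finite F \<longrightarrow>
      (\<exists>c. rann UNIV (right_ideal_gen F) = rann UNIV {c * t | t. True}))"

definition ac_left :: "'a::ring_1 itself \<Rightarrow> bool" where
  "ac_left _ \<longleftrightarrow> (\<forall>F::'a set. finite F \<longrightarrow>
      (\<exists>c. lann UNIV (left_ideal_gen F) = lann UNIV {t * c | t. True}))"

end

theory Submission
  imports Defs
begin

lemma comp_pow_unit:
  "comp_pow f k (\<lambda>j. if j = i then 1 else 0) = (if i < k then f i else id)"
  by (induction k) (auto simp: less_Suc_eq)

lemma sig_compat:
  assumes "Sigma_compatible R n \<sigma>" "i < n" "a \<in> R" "b \<in> R" "a * b = 0"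
  shows "a * \<sigma> i b = 0"
  using assms comp_pow_unit[of \<sigma> n i] unfolding Sigma_compatible_def
  by (metis (no_types, lifting))

lemma del_compat:
  assumes "Delta_compatible R n \<delta>" "i < n" "a \<in> R" "b \<in> R" "a * b = 0"
  shows "a * \<delta> i b = 0"
  using assms comp_pow_unit[of \<delta> n i] unfolding Delta_compatible_def
  by (metis (no_types, lifting))

lemma one_minus_in:
  assumes "subring_of R" "e \<in> R" shows "1 - e \<in> R"
  using assms unfolding subring_of_def by (metis diff_conv_add_uminus)

lemma x_comm:
  assumes pm: "PBW_maps R n x \<sigma> \<delta>" and sc: "Sigma_compatible R n \<sigma>"
    and dc: "Delta_compatible R n \<delta>" and sr: "subring_of R"
    and e: "e \<in> R" "e * e = e" and i: "i < n"
  shows "x i * e = e * x i"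
proof -
  have c: "1 - e \<in> R" using one_minus_in[OF sr e(1)] .
  have ce: "(1 - e) * e = 0" using e by (simp add: algebra_simps)
  have ec: "e * (1 - e) = 0" using e by (simp add: algebra_simps)
  have 1: "x i * e = \<sigma> i e * x i + \<delta> i e" using pm e i unfolding PBW_maps_def by blast
  have 2: "x i * (1 - e) = \<sigma> i (1 - e) * x i + \<delta> i (1 - e)" using pm c i unfolding PBW_maps_def by blast
  have a1: "(1 - e) * \<sigma> i e = 0" using sig_compat[OF sc i c e(1) ce] .
  have a2: "(1 - e) * \<delta> i e = 0" using del_compat[OF dc i c e(1) ce] .
  have b1: "e * \<sigma> i (1 - e) = 0" using sig_compat[OF sc i e(1) c ec] .
  have b2: "e * \<delta> i (1 - e) = 0" using del_compat[OF dc i e(1) c ec] .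
  have "(1 - e) * (x i * e) = (1 - e) * \<sigma> i e * x i + (1 - e) * \<delta> i e"
    by (simp add: 1 distrib_left mult.assoc)
  also have "\<dots> = 0" using a1 a2 by simp
  finally have "x i * e - e * (x i * e) = 0" by (simp add: left_diff_distrib)
  then have A: "x i * e = e * x i * e" by (simp add: mult.assoc)
  have "e * (x i * (1 - e)) = e * \<sigma> i (1 - e) * x i + e * \<delta> i (1 - e)"
    by (simp add: 2 distrib_left mult.assoc)
  then have "e * (x i * (1 - e)) = 0" using b1 b2 by simp
  moreover have "e * (x i * (1 - e)) = e * x i - e * x i * e"
    by (simp add: right_diff_distrib mult.assoc)
  ultimately have "e * x i - e * x i * e = 0" by simp
  then have B: "e * x i = e * x i * e" by simp
  from A B[symmetric] show ?thesis by (rule trans)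
qed

lemma pow_comm: "(y::'a::ring_1) * e = e * y \<Longrightarrow> y ^ m * e = e * y ^ m"
proof (induction m)
  case (Suc m)
  have "y ^ Suc m * e = y * (y ^ m * e)" by (simp add: mult.assoc)
  also have "\<dots> = y * (e * y ^ m)" using Suc.IH[OF Suc.prems] by simp
  also have "\<dots> = y * e * y ^ m" by (simp only: mult.assoc)
  also have "\<dots> = e * y ^ Suc m" using Suc.prems by (metis mult.assoc power_Suc)
  finally show ?case .
qed simp

lemma mono_comm:
  assumes "\<And>i. i < n \<Longrightarrow> x i * e = e * x i" "k \<le> n"
  shows "std_mono x k \<alpha> * e = e * std_mono x k \<alpha>"
  using assms(2)
proof (induction k)
  case (Suc k)
  have h: "x k ^ \<alpha> k * e = e * x k ^ \<alpha> k" using pow_comm[of "x k" e] assms(1) Suc.prems by simp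
  have "std_mono x (Suc k) \<alpha> * e = std_mono x k \<alpha> * (x k ^ \<alpha> k * e)" by (simp add: mult.assoc)
  also have "\<dots> = std_mono x k \<alpha> * e * x k ^ \<alpha> k" using h by (simp add: mult.assoc)
  also have "\<dots> = e * std_mono x (Suc k) \<alpha>" using Suc by (simp add: mult.assoc)
  finally show ?case .
qed simp

lemma idem_right:
  assumes ab: "abelian_ring R" and sr: "subring_of R" and pp: "right_pp R"
    and "finite C" "C \<subseteq> R"
  shows "\<exists>e\<in>R. e * e = e \<and> (\<forall>r\<in>R. e * r = r * e) \<and> (\<forall>b\<in>R. (\<forall>a\<in>C. a * b = 0) \<longleftrightarrow> e * b = b)"
  using assms(4,5)
proof (induction C rule: finite_induct)
  case empty
  then show ?case using sr unfolding subring_of_def by (intro bexI[of _ 1]) auto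
next
  case (insert a C)
  then have "C \<subseteq> R" by simp
  then obtain e where e: "e \<in> R" "e * e = e" "\<forall>r\<in>R. e * r = r * e"
    and e4': "\<forall>b\<in>R. (\<forall>a\<in>C. a * b = 0) \<longleftrightarrow> e * b = b" using insert.IH by blast
  have e4: "(\<forall>a\<in>C. a * b = 0) \<longleftrightarrow> e * b = b" if "b \<in> R" for b using e4' that by blast
  from insert.prems pp obtain f where f: "f \<in> R" "f * f = f" "rann R {a} = {f * r | r. r \<in> R}"
    unfolding right_pp_def by blast
  have fc: "\<forall>r\<in>R. f * r = r * f" using ab f(1,2) unfolding abelian_ring_def by blast
  have fa: "a * b = 0 \<longleftrightarrow> f * b = b" if b: "b \<in> R" for b
  proof
    assume "a * b = 0"
    then have "b \<in> rann R {a}" using b unfolding rann_def by auto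
    then obtain r where r: "b = f * r" using f by auto
    have "f * (f * r) = (f * f) * r" by (simp add: mult.assoc)
    then show "f * b = b" using f(2) r by simp
  next
    assume h: "f * b = b"
    have "b \<in> {f * r | r. r \<in> R}" using b h by (metis (mono_tags, lifting) mem_Collect_eq)
    then have "b \<in> rann R {a}" using f by simp
    then show "a * b = 0" unfolding rann_def by auto
  qed
  have fe: "f * e = e * f" using e(3)[rule_format, OF f(1)] by (rule sym)
  have fe_in: "f * e \<in> R" using sr e(1) f(1) unfolding subring_of_def by blast
  show ?case
  proof (intro bexI conjI ballI)
    have "f * e * (f * e) = f * (e * f) * e" by (simp add: mult.assoc)
    also have "\<dots> = (f * f) * (e * e)" by (metis fe mult.assoc)
    also have "\<dots> = f * e" using e(2) f(2) by simp
    finally show "f * e * (f * e) = f * e" .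
    show "f * e * r = r * (f * e)" if r: "r \<in> R" for r
    proof -
      have er: "e * r = r * e" using e(3) r by blast
      have fr: "f * r = r * f" using fc r by blast
      have "f * e * r = f * (e * r)" by (simp only: mult.assoc)
      also have "\<dots> = (f * r) * e" by (simp only: er mult.assoc)
      also have "\<dots> = r * (f * e)" by (simp only: fr mult.assoc)
      finally show ?thesis .
    qed
    show "(\<forall>a\<in>insert a C. a * b = 0) = (f * e * b = b)" if b: "b \<in> R" for b
    proof
      assume "\<forall>a\<in>insert a C. a * b = 0"
      then have h: "f * b = b" "e * b = b" using fa[OF b] e4[OF b] by auto
      have "f * e * b = f * (e * b)" by (simp add: mult.assoc)
      then show "f * e * b = b" using h by simp
    next
      assume h: "f * e * b = b"
      have "f * b = f * (f * e * b)" using h by simp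
      also have "\<dots> = (f * f) * e * b" by (simp add: mult.assoc)
      also have "\<dots> = b" using h f(2) by simp
      finally have 1: "f * b = b" .
      have "e * b = e * (f * e * b)" using h by simp
      also have "\<dots> = (e * f) * e * b" by (simp add: mult.assoc)
      also have "\<dots> = f * (e * e) * b" by (metis fe mult.assoc)
      also have "\<dots> = b" using h e(2) by simp
      finally have 2: "e * b = b" .
      show "\<forall>a\<in>insert a C. a * b = 0" using fa[OF b] e4[OF b] 1 2 by auto
    qed
  qed (rule fe_in)
qed

lemma idem_left:
  assumes ab: "abelian_ring R" and sr: "subring_of R" and pp: "left_pp R"
    and "finite C" "C \<subseteq> R"
  shows "\<exists>e\<in>R. e * e = e \<and> (\<forall>r\<in>R. e * r = r * e) \<and> (\<forall>b\<in>R. (\<forall>a\<in>C. b * a = 0) \<longleftrightarrow> b * e = b)"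
  using assms(4,5)
proof (induction C rule: finite_induct)
  case empty
  then show ?case using sr unfolding subring_of_def by (intro bexI[of _ 1]) auto
next
  case (insert a C)
  then have "C \<subseteq> R" by simp
  then obtain e where e: "e \<in> R" "e * e = e" "\<forall>r\<in>R. e * r = r * e"
    and e4': "\<forall>b\<in>R. (\<forall>a\<in>C. b * a = 0) \<longleftrightarrow> b * e = b" using insert.IH by blast
  have e4: "(\<forall>a\<in>C. b * a = 0) \<longleftrightarrow> b * e = b" if "b \<in> R" for b using e4' that by blast
  from insert.prems pp obtain f where f: "f \<in> R" "f * f = f" "lann R {a} = {r * f | r. r \<in> R}"
    unfolding left_pp_def by blast
  have fc: "\<forall>r\<in>R. f * r = r * f" using ab f(1,2) unfolding abelian_ring_def by blast
  have fa: "b * a = 0 \<longleftrightarrow> b * f = b" if b: "b \<in> R" for b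
  proof
    assume "b * a = 0"
    then have "b \<in> lann R {a}" using b unfolding lann_def by auto
    then obtain r where r: "b = r * f" using f by auto
    have "r * f * f = r * (f * f)" by (simp add: mult.assoc)
    then show "b * f = b" using f(2) r by simp
  next
    assume h: "b * f = b"
    have "b \<in> {r * f | r. r \<in> R}" using b h by (metis (mono_tags, lifting) mem_Collect_eq)
    then have "b \<in> lann R {a}" using f by simp
    then show "b * a = 0" unfolding lann_def by auto
  qed
  have fe: "f * e = e * f" using e(3)[rule_format, OF f(1)] by (rule sym)
  have fe_in: "f * e \<in> R" using sr e(1) f(1) unfolding subring_of_def by blast
  show ?case
  proof (intro bexI conjI ballI)
    have "f * e * (f * e) = f * (e * f) * e" by (simp add: mult.assoc)
    also have "\<dots> = (f * f) * (e * e)" by (metis fe mult.assoc)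
    also have "\<dots> = f * e" using e(2) f(2) by simp
    finally show "f * e * (f * e) = f * e" .
    show "f * e * r = r * (f * e)" if r: "r \<in> R" for r
    proof -
      have er: "e * r = r * e" using e(3) r by blast
      have fr: "f * r = r * f" using fc r by blast
      have "f * e * r = f * (e * r)" by (simp only: mult.assoc)
      also have "\<dots> = (f * r) * e" by (simp only: er mult.assoc)
      also have "\<dots> = r * (f * e)" by (simp only: fr mult.assoc)
      finally show ?thesis .
    qed
    show "(\<forall>a\<in>insert a C. b * a = 0) = (b * (f * e) = b)" if b: "b \<in> R" for b
    proof
      assume "\<forall>a\<in>insert a C. b * a = 0"
      then have h: "b * f = b" "b * e = b" using fa[OF b] e4[OF b] by auto
      have "b * (f * e) = b * f * e" by (simp add: mult.assoc)
      then show "b * (f * e) = b" using h by simp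
    next
      assume h: "b * (f * e) = b"
      have "b * f = b * (f * e) * f" using h by simp
      also have "\<dots> = b * (f * f) * e" by (metis fe mult.assoc)
      also have "\<dots> = b" using h f(2) by (simp add: mult.assoc)
      finally have 1: "b * f = b" .
      have "b * e = b * (f * e) * e" using h by simp
      also have "\<dots> = b * (f * (e * e))" by (simp add: mult.assoc)
      also have "\<dots> = b" using h e(2) by simp
      finally have 2: "b * e = b" .
      show "\<forall>a\<in>insert a C. b * a = 0" using fa[OF b] e4[OF b] 1 2 by auto
    qed
  qed (rule fe_in)
qed


lemma lc_left: "c * lin_comb x n S b = lin_comb x n S (\<lambda>\<beta>. c * b \<beta>)"
  unfolding lin_comb_def by (simp add: sum_distrib_left mult.assoc)

lemma lc_left_zero: "(\<And>\<alpha>. \<alpha> \<in> S \<Longrightarrow> e * a \<alpha> = 0) \<Longrightarrow> e * lin_comb x n S a = 0"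
  unfolding lc_left unfolding lin_comb_def by (simp add: mult.assoc)

lemma lc_right_zero:
  assumes "\<And>\<alpha>. \<alpha> \<in> S \<Longrightarrow> a \<alpha> * e = 0"
    and "\<And>\<alpha>. std_mono x n \<alpha> * e = e * std_mono x n \<alpha>"
  shows "lin_comb x n S a * e = 0"
proof -
  have "lin_comb x n S a * e = (\<Sum>\<alpha>\<in>S. a \<alpha> * (std_mono x n \<alpha> * e))"
    unfolding lin_comb_def by (simp add: sum_distrib_right mult.assoc)
  also have "\<dots> = (\<Sum>\<alpha>\<in>S. (a \<alpha> * e) * std_mono x n \<alpha>)"
    using assms(2) by (simp add: mult.assoc)
  also have "\<dots> = 0" using assms(1) by simp
  finally show ?thesis .
qed

lemma single_sum:
  assumes "finite F" "f \<in> F"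
  shows "(\<Sum>f'\<in>F. f' * (if f' = f then t else 0)) = f * (t::'a::ring_1)"
    and "(\<Sum>f'\<in>F. (if f' = f then t else 0) * f') = t * f"
proof -
  have "(\<Sum>f'\<in>F. f' * (if f' = f then t else 0)) = (\<Sum>f'\<in>F. if f' = f then f' * t else 0)"
    by (rule sum.cong) auto
  then show "(\<Sum>f'\<in>F. f' * (if f' = f then t else 0)) = f * t" using assms by simp
  have "(\<Sum>f'\<in>F. (if f' = f then t else 0) * f') = (\<Sum>f'\<in>F. if f' = f then t * f' else 0)"
    by (rule sum.cong) auto
  then show "(\<Sum>f'\<in>F. (if f' = f then t else 0) * f') = t * f" using assms by simp
qed

theorem mainTheorem2:
  fixes R :: "'a::ring_1 set" and n :: nat and x :: "nat \<Rightarrow> 'a"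
    and \<sigma> \<delta> :: "nat \<Rightarrow> 'a \<Rightarrow> 'a"
  assumes "skew_PBW R n x"
    and "PBW_maps R n x \<sigma> \<delta>"
    and "Sigma_compatible R n \<sigma>" and "Delta_compatible R n \<delta>"
    and "abelian_ring R" and "NI_ring R" and "SA1 R n x"
  shows "(right_pp R \<longrightarrow> ac_right TYPE('a)) \<and> (left_pp R \<longrightarrow> ac_left TYPE('a))"
proof -
  have sr: "subring_of R" using assms(1) unfolding skew_PBW_def by blast
  have rep: "\<forall>f. \<exists>S c. finite S \<and> S \<subseteq> exps n \<and> (\<forall>\<alpha>\<in>S. c \<alpha> \<in> R) \<and> f = lin_comb x n S c"
    using assms(1) unfolding skew_PBW_def by blast
  obtain Sf cf where rep': "\<And>f. finite (Sf f) \<and> Sf f \<subseteq> exps n \<and> (\<forall>\<alpha>\<in>Sf f. cf f \<alpha> \<in> R)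
      \<and> f = lin_comb x n (Sf f) (cf f)"
    using rep by metis
  have cfR: "cf f \<alpha> \<in> R" if "\<alpha> \<in> Sf f" for f \<alpha> using rep' that by blast
  have fin: "finite (Sf f)" for f using rep' by blast
  have feq: "f = lin_comb x n (Sf f) (cf f)" for f using rep' by blast
  have comm: "std_mono x n \<alpha> * e = e * std_mono x n \<alpha>" if "e \<in> R" "e * e = e" for e \<alpha>
    using mono_comm[of n x e] x_comm[OF assms(2) assms(3) assms(4) sr that] by blast
  have sa: "cf f \<alpha> * cf u \<beta> = 0" if "f * u = 0" "\<alpha> \<in> Sf f" "\<beta> \<in> Sf u" for f u \<alpha> \<beta>
  proof -
    have "lin_comb x n (Sf f) (cf f) * lin_comb x n (Sf u) (cf u) = 0" using that(1) feq by metis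
    then show ?thesis using assms(7) rep'[of f] rep'[of u] that(2,3) unfolding SA1_def by blast
  qed
  show ?thesis
  proof (intro conjI impI)
    assume pp: "right_pp R"
    show "ac_right TYPE('a)" unfolding ac_right_def
    proof (intro allI impI)
      fix F :: "'a set" assume finF: "finite F"
      define C where "C = (\<Union>f\<in>F. cf f ` Sf f)"
      have "finite C" unfolding C_def using finF fin by blast
      moreover have "C \<subseteq> R" unfolding C_def using cfR by blast
      ultimately obtain e where e: "e \<in> R" "e * e = e"
        and e4: "\<forall>b\<in>R. (\<forall>a\<in>C. a * b = 0) \<longleftrightarrow> e * b = b"
        using idem_right[OF assms(5) sr pp] by blast
      have ae: "a * e = 0" if "a \<in> C" for a using e4 e that by blast
      define c where "c = 1 - e"
      have cb: "c * b = b - e * b" for b unfolding c_def by (simp add: left_diff_distrib)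
      have "rann UNIV (right_ideal_gen F) = rann UNIV {c * t | t. True}"
      proof (intro equalityI subsetI)
        fix g assume "g \<in> rann UNIV (right_ideal_gen F)"
        then have gz: "\<And>s. s \<in> right_ideal_gen F \<Longrightarrow> s * g = 0" by (simp add: rann_def)
        have "c * t * g = 0" for t
        proof -
          define u where "u = t * g"
          have fu: "f * u = 0" if fF: "f \<in> F" for f
          proof -
            have "\<exists>g. f * t = (\<Sum>f'\<in>F. f' * g f') \<and> True"
              by (rule exI[of _ "\<lambda>f'. if f' = f then t else 0"]) (simp add: single_sum(1)[OF finF fF])
            then have "f * t \<in> right_ideal_gen F" unfolding right_ideal_gen_def by simp
            then have "f * t * g = 0" using gz by blast
            then show ?thesis unfolding u_def by (simp add: mult.assoc)
          qed
          have "c * cf u \<beta> = 0" if b: "\<beta> \<in> Sf u" for \<beta>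
          proof -
            have "\<forall>a\<in>C. a * cf u \<beta> = 0" unfolding C_def using sa[OF fu _ b] by blast
            then have "e * cf u \<beta> = cf u \<beta>" using e4 cfR[OF b] by blast
            then show ?thesis using cb by simp
          qed
          then have "c * u = 0" using feq[of u] lc_left_zero[of "Sf u" c "cf u" x n] by metis
          then show ?thesis unfolding u_def by (simp add: mult.assoc)
        qed
        then show "g \<in> rann UNIV {c * t | t. True}" by (auto simp: rann_def)
      next
        fix g assume "g \<in> rann UNIV {c * t | t. True}"
        then have gz: "\<And>t. c * t * g = 0" by (auto simp: rann_def)
        have "s * g = 0" if "s \<in> right_ideal_gen F" for s
        proof -
          obtain h where s: "s = (\<Sum>f\<in>F. f * h f)" using \<open>s \<in> right_ideal_gen F\<close>
            unfolding right_ideal_gen_def by blast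
          have "s * g = (\<Sum>f\<in>F. f * (h f * g))" unfolding s by (simp add: sum_distrib_right mult.assoc)
          also have "\<dots> = 0"
          proof (rule sum.neutral, rule ballI)
            fix f assume fF: "f \<in> F"
            define u where "u = h f * g"
            have "c * u = 0" using gz[of "h f"] unfolding u_def by (simp add: mult.assoc)
            then have ue: "e * u = u" using cb by simp
            have "lin_comb x n (Sf f) (cf f) * e = 0"
              by (rule lc_right_zero) (use ae fF comm[OF e] in \<open>auto simp: C_def\<close>)
            then have fe: "f * e = 0" using feq[of f] by metis
            have "f * u = f * e * u" using ue by (simp add: mult.assoc)
            then show "f * (h f * g) = 0" using fe unfolding u_def by simp
          qed
          finally show ?thesis .
        qed
        then show "g \<in> rann UNIV (right_ideal_gen F)" by (auto simp: rann_def)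
      qed
      then show "\<exists>c. rann UNIV (right_ideal_gen F) = rann UNIV {c * t | t. True}" by blast
    qed
  next
    assume pp: "left_pp R"
    show "ac_left TYPE('a)" unfolding ac_left_def
    proof (intro allI impI)
      fix F :: "'a set" assume finF: "finite F"
      define C where "C = (\<Union>f\<in>F. cf f ` Sf f)"
      have "finite C" unfolding C_def using finF fin by blast
      moreover have "C \<subseteq> R" unfolding C_def using cfR by blast
      ultimately obtain e where e: "e \<in> R" "e * e = e"
        and e4: "\<forall>b\<in>R. (\<forall>a\<in>C. b * a = 0) \<longleftrightarrow> b * e = b"
        using idem_left[OF assms(5) sr pp] by blast
      have ea: "e * a = 0" if "a \<in> C" for a using e4 e that by blast
      define c where "c = 1 - e"
      have bc: "b * c = b - b * e" for b unfolding c_def by (simp add: right_diff_distrib)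
      have cb: "c * b = b - e * b" for b unfolding c_def by (simp add: left_diff_distrib)
      have ccomm: "std_mono x n \<alpha> * c = c * std_mono x n \<alpha>" for \<alpha>
        unfolding bc cb using comm[OF e] by simp
      have "lann UNIV (left_ideal_gen F) = lann UNIV {t * c | t. True}"
      proof (intro equalityI subsetI)
        fix g assume "g \<in> lann UNIV (left_ideal_gen F)"
        then have gz: "\<And>s. s \<in> left_ideal_gen F \<Longrightarrow> g * s = 0" by (simp add: lann_def)
        have "g * (t * c) = 0" for t
        proof -
          define u where "u = g * t"
          have fu: "u * f = 0" if fF: "f \<in> F" for f
          proof -
            have "\<exists>g. t * f = (\<Sum>f'\<in>F. g f' * f') \<and> True"
              by (rule exI[of _ "\<lambda>f'. if f' = f then t else 0"]) (simp add: single_sum(2)[OF finF fF])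
            then have "t * f \<in> left_ideal_gen F" unfolding left_ideal_gen_def by simp
            then have "g * (t * f) = 0" using gz by blast
            then show ?thesis unfolding u_def by (simp add: mult.assoc)
          qed
          have "cf u \<beta> * c = 0" if b: "\<beta> \<in> Sf u" for \<beta>
          proof -
            have "\<forall>a\<in>C. cf u \<beta> * a = 0" unfolding C_def using sa[OF fu b] by blast
            then have "cf u \<beta> * e = cf u \<beta>" using e4 cfR[OF b] by blast
            then show ?thesis using bc by simp
          qed
          then have "lin_comb x n (Sf u) (cf u) * c = 0"
            using lc_right_zero[of "Sf u" "cf u" c x n] ccomm by blast
          then have "u * c = 0" using feq[of u] by metis
          then show ?thesis unfolding u_def by (simp add: mult.assoc)
        qed
        then show "g \<in> lann UNIV {t * c | t. True}" by (auto simp: lann_def)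
      next
        fix g assume "g \<in> lann UNIV {t * c | t. True}"
        then have gz: "\<And>t. g * (t * c) = 0" by (auto simp: lann_def)
        have "g * s = 0" if "s \<in> left_ideal_gen F" for s
        proof -
          obtain h where s: "s = (\<Sum>f\<in>F. h f * f)" using \<open>s \<in> left_ideal_gen F\<close>
            unfolding left_ideal_gen_def by blast
          have "g * s = (\<Sum>f\<in>F. (g * h f) * f)" unfolding s by (simp add: sum_distrib_left mult.assoc)
          also have "\<dots> = 0"
          proof (rule sum.neutral, rule ballI)
            fix f assume fF: "f \<in> F"
            define u where "u = g * h f"
            have "u * c = 0" using gz[of "h f"] unfolding u_def by (simp add: mult.assoc)
            then have ue: "u * e = u" using bc by simp
            have "e * lin_comb x n (Sf f) (cf f) = 0"
              by (rule lc_left_zero) (use ea fF in \<open>auto simp: C_def\<close>)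
            then have ef: "e * f = 0" using feq[of f] by metis
            have "u * f = u * (e * f)" using ue by (metis mult.assoc)
            then show "g * h f * f = 0" using ef unfolding u_def by simp
          qed
          finally show ?thesis .
        qed
        then show "g \<in> lann UNIV (left_ideal_gen F)" by (auto simp: lann_def)
      qed
      then show "\<exists>c. lann UNIV (left_ideal_gen F) = lann UNIV {t * c | t. True}" by blast
    qed
  qed
qed

end
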